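(* It holds that $L_{BA}=\begin{pmatrix} 1/w_{BA} & v_{BA}/w_{BA} \\ v_{BA}/w_{BA} & 1/w_{BA} \end{pmatrix}$.
   Context: The model is a discrete one-dimensional environment populated by stateless automata ("elementary bodies"); each time step an elementary body either moves one coordinate unit in its direction or reverses direction. A body is a finite set of elementary bodies; an inertial body is one with constant spatial velocity and constant proper time velocity. For inertial bodies $A,B$, $O_B$ is the reference frame associated with $B$ (events written as column vectors $\begin{pmatrix} x\\ \tau_B\end{pmatrix}$ of space coordinate and proper time of $B$), in which $B$ has coordinate $x_{BB}\equiv 0$ and proper time velocity $1$. $v_{BA}$ and $w_{BA}$ denote the (constant) spatial velocity and proper time velocity of $B$ in the reference frame $O_A$, so that $x_{BA}(\tau_A)=v_{BA}\tau_A$ and $\tau_{BA}(\tau_A)=w_{BA}\tau_A$ when origins coincide. $L_{BA}:O_B\to O_A$ is the map sending coordinates of an event in $O_B$ to its coordinates in $O_A$; coordinates in different inertial frames are related affinely, the origins of $O_A$ and $O_B$ are assumed to coincide, so $L_{BA}$ is linear with matrix $\begin{pmatrix} a_{11} & a_{12} \\ a_{21} & a_{22} \end{pmatrix}$. Since $\begin{pmatrix} 1\\1\end{pmatrix}$ and $\begin{pmatrix} -1\\1\end{pmatrix}$ are eigenvectors of $L_{BA}$ (standard configuration), $a_{11}=a_{22}$ and $a_{12}=a_{21}$. *)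

theory Defs
  imports "HOL-Analysis.Analysis"
begin

text \<open>Events in a reference frame are column vectors (x, tau) in real^2;
  component 1 is the space coordinate, component 2 the proper time.\<close>
definition vec2 :: "real \<Rightarrow> real \<Rightarrow> real^2" where
  "vec2 x t = vector [x, t]"

definition mat2 :: "real \<Rightarrow> real \<Rightarrow> real \<Rightarrow> real \<Rightarrow> real^2^2" where
  "mat2 a11 a12 a21 a22 = vector [vector [a11, a12], vector [a21, a22]]"

end

theory Submission
  imports Defs
begin

lemma mv1: "(L *v vec2 x t) $ 1 = L$1$1 * x + L$1$2 * t"
  by (simp add: vec2_def matrix_vector_mult_def sum_2 vector_def)
lemma mv2: "(L *v vec2 x t) $ 2 = L$2$1 * x + L$2$2 * t"
  by (simp add: vec2_def matrix_vector_mult_def sum_2 vector_def)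
lemma v1: "vec2 x t $ 1 = x" by (simp add: vec2_def)
lemma v2: "vec2 x t $ 2 = t" by (simp add: vec2_def)

lemma mat2_eq: "M = mat2 a b c d \<longleftrightarrow> M$1$1 = a \<and> M$1$2 = b \<and> M$2$1 = c \<and> M$2$2 = d"
  unfolding mat2_def
  by (auto simp: vec_eq_iff forall_2)

theorem theorem2:
  fixes L_BA :: "real^2^2" and v_BA w_BA :: real
  assumes w_pos: "w_BA > 0"
    and eig1: "\<exists>c. L_BA *v vec2 1 1 = c *s vec2 1 1"
    and eig2: "\<exists>d. L_BA *v vec2 (-1) 1 = d *s vec2 (-1) 1"
    and worldline_B: "\<forall>tA. L_BA *v vec2 0 (w_BA * tA) = vec2 (v_BA * tA) tA"
  shows "L_BA = mat2 (1 / w_BA) (v_BA / w_BA) (v_BA / w_BA) (1 / w_BA)"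
proof -
  obtain c where c: "L_BA *v vec2 1 1 = c *s vec2 1 1" using eig1 by blast
  obtain d where d: "L_BA *v vec2 (-1) 1 = d *s vec2 (-1) 1" using eig2 by blast
  have w: "L_BA *v vec2 0 (w_BA * 1) = vec2 (v_BA * 1) 1" using worldline_B by blast
  have c1: "L_BA$1$1 + L_BA$1$2 = c" and c2: "L_BA$2$1 + L_BA$2$2 = c"
    using arg_cong[OF c, of "\<lambda>v. v$1"] arg_cong[OF c, of "\<lambda>v. v$2"]
    by (simp_all add: mv1 mv2 v1 v2)
  have d1: "- L_BA$1$1 + L_BA$1$2 = - d" and d2: "- L_BA$2$1 + L_BA$2$2 = d"
    using arg_cong[OF d, of "\<lambda>v. v$1"] arg_cong[OF d, of "\<lambda>v. v$2"]
    by (simp_all add: mv1 mv2 v1 v2)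
  have w1: "L_BA$1$2 * w_BA = v_BA" and w2: "L_BA$2$2 * w_BA = 1"
    using arg_cong[OF w, of "\<lambda>v. v$1"] arg_cong[OF w, of "\<lambda>v. v$2"]
    by (simp_all add: mv1 mv2 v1 v2)
  have e1: "L_BA$1$1 = L_BA$2$2" and e2: "L_BA$1$2 = L_BA$2$1"
    using c1 c2 d1 d2 by linarith+
  have "L_BA$2$2 = 1 / w_BA" "L_BA$1$2 = v_BA / w_BA"
    using w1 w2 w_pos by (simp_all add: field_simps)
  then show ?thesis unfolding mat2_eq using e1 e2 by simp
qed

end
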